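(* Let $\alpha>1$ and let $m_0\in\mathrm{BUC}([0,\infty))$ be non-decreasing with $m_0(0)=0$, $M=\sup m_0>0$, and suppose there is $c_0\in(0,\infty)$ with $m_0(\rho)<M$ for $\rho<c_0$ and $m_0(\rho)=M$ for $\rho\ge c_0$. If $$\limsup_{\rho\to c_0^-}\frac{M-m_0(\rho)}{(c_0-\rho)^{\frac\alpha{\alpha-1}}}=+\infty,$$ then there is no waiting time: for every $t>0$, the viscosity solution $m$ of the mass problem with datum $m_0$ satisfies $S(t):=\inf\{\rho: m(t,\rho)=M\}>c_0$.
   Context: $\mathrm{BUC}$ denotes bounded uniformly continuous functions. The mass problem is $m_t+(m_\rho)_+^\alpha m=0$ ($t,\rho>0$), $m(t,0)=0$, $m(0,\cdot)=m_0$, in the viscosity sense: with Fréchet super/subdifferentials $D^\pm$, a continuous $m$ is a subsolution if $p_1+(p_2)_+^\alpha m\le0$ for $(p_1,p_2)\in D^+m(t,\rho)$, $m(0,\cdot)\le m_0$, $m(t,0)\le0$; a supersolution with reversed inequalities and $D^-$; a solution if both. For $m_0\in\mathrm{BUC}$ non-decreasing with $m_0(0)=0$ a unique $\mathrm{BUC}$ viscosity solution exists and a comparison principle holds. *)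

theory Defs
  imports "HOL-Analysis.Analysis"
begin

definition quadrant :: "(real \<times> real) set" where
  "quadrant = {0..} \<times> {0..}"

definition frechet_superdiff :: "(real \<Rightarrow> real \<Rightarrow> real) \<Rightarrow> real \<Rightarrow> real \<Rightarrow> (real \<times> real) set" where
  "frechet_superdiff u t \<rho> = {(p1, p2). \<forall>\<epsilon>>0. \<exists>\<delta>>0. \<forall>s r. s \<ge> 0 \<longrightarrow> r \<ge> 0 \<longrightarrow>
      norm ((s, r) - (t, \<rho>)) < \<delta> \<longrightarrow>
      u s r - u t \<rho> - p1 * (s - t) - p2 * (r - \<rho>) \<le> \<epsilon> * norm ((s, r) - (t, \<rho>))}"

definition frechet_subdiff :: "(real \<Rightarrow> real \<Rightarrow> real) \<Rightarrow> real \<Rightarrow> real \<Rightarrow> (real \<times> real) set" where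
  "frechet_subdiff u t \<rho> = {(p1, p2). \<forall>\<epsilon>>0. \<exists>\<delta>>0. \<forall>s r. s \<ge> 0 \<longrightarrow> r \<ge> 0 \<longrightarrow>
      norm ((s, r) - (t, \<rho>)) < \<delta> \<longrightarrow>
      u s r - u t \<rho> - p1 * (s - t) - p2 * (r - \<rho>) \<ge> - \<epsilon> * norm ((s, r) - (t, \<rho>))}"

definition posp_pow :: "real \<Rightarrow> real \<Rightarrow> real" where
  "posp_pow \<alpha> p = (max p 0) powr \<alpha>"

definition mass_subsolution :: "real \<Rightarrow> (real \<Rightarrow> real) \<Rightarrow> (real \<Rightarrow> real \<Rightarrow> real) \<Rightarrow> bool" where
  "mass_subsolution \<alpha> m0 m \<longleftrightarrow>
     continuous_on quadrant (\<lambda>(t, \<rho>). m t \<rho>) \<and>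
     (\<forall>t>0. \<forall>\<rho>>0. \<forall>(p1, p2) \<in> frechet_superdiff m t \<rho>. p1 + posp_pow \<alpha> p2 * m t \<rho> \<le> 0) \<and>
     (\<forall>\<rho>\<ge>0. m 0 \<rho> \<le> m0 \<rho>) \<and> (\<forall>t\<ge>0. m t 0 \<le> 0)"

definition mass_supersolution :: "real \<Rightarrow> (real \<Rightarrow> real) \<Rightarrow> (real \<Rightarrow> real \<Rightarrow> real) \<Rightarrow> bool" where
  "mass_supersolution \<alpha> m0 m \<longleftrightarrow>
     continuous_on quadrant (\<lambda>(t, \<rho>). m t \<rho>) \<and>
     (\<forall>t>0. \<forall>\<rho>>0. \<forall>(p1, p2) \<in> frechet_subdiff m t \<rho>. p1 + posp_pow \<alpha> p2 * m t \<rho> \<ge> 0) \<and>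
     (\<forall>\<rho>\<ge>0. m 0 \<rho> \<ge> m0 \<rho>) \<and> (\<forall>t\<ge>0. m t 0 \<ge> 0)"

definition mass_solution :: "real \<Rightarrow> (real \<Rightarrow> real) \<Rightarrow> (real \<Rightarrow> real \<Rightarrow> real) \<Rightarrow> bool" where
  "mass_solution \<alpha> m0 m \<longleftrightarrow> mass_subsolution \<alpha> m0 m \<and> mass_supersolution \<alpha> m0 m"

definition BUC1 :: "(real \<Rightarrow> real) \<Rightarrow> bool" where
  "BUC1 f \<longleftrightarrow> bounded (f ` {0..}) \<and> uniformly_continuous_on {0..} f"

definition BUC2 :: "(real \<Rightarrow> real \<Rightarrow> real) \<Rightarrow> bool" where
  "BUC2 u \<longleftrightarrow> bounded ((\<lambda>(t, \<rho>). u t \<rho>) ` quadrant) \<and>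
     uniformly_continuous_on quadrant (\<lambda>(t, \<rho>). u t \<rho>)"

text \<open>Free boundary S(t) = inf{rho >= 0 : m(t,rho) = M}, as an extended real (inf of empty set = +inf).\<close>
definition free_boundary :: "(real \<Rightarrow> real \<Rightarrow> real) \<Rightarrow> real \<Rightarrow> real \<Rightarrow> ereal" where
  "free_boundary m M t = Inf (ereal ` {\<rho>. \<rho> \<ge> 0 \<and> m t \<rho> = M})"

end

theory Submission
  imports Defs
begin


definition hp :: "real \<Rightarrow> real \<Rightarrow> real" where "hp \<beta> x = (max x 0) powr \<beta>"

lemma hp_deriv:
  assumes b: "\<beta> > 1"
  shows "(hp \<beta> has_real_derivative (\<beta> * (max x 0) powr (\<beta> - 1))) (at x)"
proof (cases "x > 0")
  case True
  have "((\<lambda>z. z powr \<beta>) has_real_derivative \<beta> * x powr (\<beta> - 1)) (at x)"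
    using has_real_derivative_powr[OF True] .
  hence "(hp \<beta> has_real_derivative \<beta> * x powr (\<beta> - 1)) (at x)"
    by (rule has_field_derivative_transform_within_open[where S="{0<..}"]) (use True in \<open>auto simp: hp_def\<close>)
  thus ?thesis using True by simp
next
  case False
  note F = False
  show ?thesis
  proof (cases "x < 0")
    case True
    have "((\<lambda>z. 0) has_real_derivative 0) (at x)" by simp
    hence "(hp \<beta> has_real_derivative 0) (at x)"
      by (rule has_field_derivative_transform_within_open[where S="{..<0}"]) (use True in \<open>auto simp: hp_def\<close>)
    thus ?thesis using True by simp
  next
    case False
    hence x0: "x = 0" using F by simp
    have "(hp \<beta> has_derivative (*) 0) (at x)"
      unfolding has_derivative_at_alt
    proof (intro conjI allI impI)
      show "bounded_linear ((*) (0::real))" by (rule bounded_linear_mult_right)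
      fix e :: real assume e: "e > 0"
      define d where "d = min 1 (e powr (1/(\<beta>-1)))"
      have d: "d > 0" unfolding d_def using e by auto
      have dpow: "d powr (\<beta>-1) \<le> e"
      proof -
        have "d powr (\<beta>-1) \<le> (e powr (1/(\<beta>-1))) powr (\<beta>-1)"
          unfolding d_def using e b d d_def by (intro powr_mono2) auto
        also have "\<dots> = e" using e b by (simp add: powr_powr)
        finally show ?thesis .
      qed
      show "\<exists>d>0. \<forall>y. norm (y - x) < d \<longrightarrow> norm (hp \<beta> y - hp \<beta> x - 0 * (y - x)) \<le> e * norm (y - x)"
      proof (intro exI[of _ d] conjI allI impI)
        show "d > 0" by (rule d)
        fix y :: real assume "norm (y - x) < d"
        hence yd: "\<bar>y\<bar> < d" using x0 by simp
        have "hp \<beta> x = 0" using x0 b by (simp add: hp_def)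
        moreover have "\<bar>hp \<beta> y\<bar> \<le> e * \<bar>y\<bar>"
        proof (cases "y > 0")
          case True
          have "hp \<beta> y = y powr \<beta>" using True by (simp add: hp_def)
          also have "\<dots> = y * y powr (\<beta> - 1)"
          proof -
            have "y * y powr (\<beta>-1) = y powr 1 * y powr (\<beta>-1)" using True by simp
            also have "\<dots> = y powr (1 + (\<beta>-1))" by (simp only: powr_add)
            finally show ?thesis by simp
          qed
          also have "\<dots> \<le> y * e"
          proof (rule mult_left_mono)
            have "y powr (\<beta>-1) \<le> d powr (\<beta>-1)" using True yd b by (intro powr_mono2) auto
            thus "y powr (\<beta>-1) \<le> e" using dpow by simp
          qed (use True in auto)
          finally show ?thesis using True by (simp add: hp_def mult.commute)
        next
          case False
          thus ?thesis using e by (simp add: hp_def max_def mult_nonneg_nonpos)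
        qed
        ultimately show "norm (hp \<beta> y - hp \<beta> x - 0 * (y - x)) \<le> e * norm (y - x)" using x0 by simp
      qed
    qed
    moreover have "\<beta> * (max x 0) powr (\<beta> - 1) = 0" using x0 by simp
    ultimately show ?thesis by (simp only: has_field_derivative_def)
  qed
qed

lemma deriv_superdiff:
  fixes f :: "real \<Rightarrow> real \<Rightarrow> real"
  assumes "((\<lambda>z. f (fst z) (snd z)) has_derivative (\<lambda>z. p1 * fst z + p2 * snd z)) (at (t,\<rho>))"
  shows "(p1,p2) \<in> frechet_superdiff f t \<rho>"
proof -
  have D: "\<forall>e>0. \<exists>d>0. \<forall>y. norm (y - (t,\<rho>)) < d \<longrightarrow>
     norm (f (fst y) (snd y) - f t \<rho> - (p1 * fst (y - (t,\<rho>)) + p2 * snd (y - (t,\<rho>)))) \<le> e * norm (y - (t,\<rho>))"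
    using assms unfolding has_derivative_at_alt by simp
  show ?thesis unfolding frechet_superdiff_def
  proof (simp only: mem_Collect_eq case_prod_conv, intro allI impI)
    fix e :: real assume "e > 0"
    from D[rule_format, OF this] obtain d where d: "d > 0" and hd: "\<forall>y. norm (y - (t,\<rho>)) < d \<longrightarrow>
     norm (f (fst y) (snd y) - f t \<rho> - (p1 * fst (y - (t,\<rho>)) + p2 * snd (y - (t,\<rho>)))) \<le> e * norm (y - (t,\<rho>))" by blast
    show "\<exists>\<delta>>0. \<forall>s r. 0 \<le> s \<longrightarrow> 0 \<le> r \<longrightarrow> norm ((s, r) - (t, \<rho>)) < \<delta> \<longrightarrow>
           f s r - f t \<rho> - p1 * (s - t) - p2 * (r - \<rho>) \<le> e * norm ((s, r) - (t, \<rho>))"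
    proof (intro exI[of _ d] conjI allI impI)
      show "d > 0" by (rule d)
      fix s r :: real assume "norm ((s, r) - (t, \<rho>)) < d"
      hence "norm (f s r - f t \<rho> - (p1 * (s - t) + p2 * (r - \<rho>))) \<le> e * norm ((s, r) - (t, \<rho>))"
        using hd[rule_format, of "(s,r)"] by simp
      thus "f s r - f t \<rho> - p1 * (s - t) - p2 * (r - \<rho>) \<le> e * norm ((s, r) - (t, \<rho>))" by simp
    qed
  qed
qed

lemma superdiff_below:
  assumes "\<forall>s r. w s r \<le> w1 s r" "w t \<rho> = w1 t \<rho>" "(p1,p2) \<in> frechet_superdiff w1 t \<rho>"
  shows "(p1,p2) \<in> frechet_superdiff w t \<rho>"
  using assms unfolding frechet_superdiff_def
  by simp (smt (verit))

lemma superdiff_max: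
  assumes "\<forall>s r. w s r \<le> w t \<rho>"
  shows "(0,0) \<in> frechet_superdiff w t \<rho>"
  using assms unfolding frechet_superdiff_def
  apply (auto intro!: exI[of _ 1])
  by (smt (verit) mult_nonneg_nonneg norm_ge_zero)




lemma v_deriv:
  fixes \<delta> C \<beta> b \<tau> t \<rho> :: real
  assumes b1: "\<beta> > 1" and tt: "t + \<tau> > 0"
  shows "((\<lambda>z. \<delta> - C * hp \<beta> (snd z - b) * (fst z + \<tau>) powr (1-\<beta>)) has_derivative
     (\<lambda>z. (- C * hp \<beta> (\<rho> - b) * ((1-\<beta>) * (t+\<tau>) powr (-\<beta>))) * fst z
        + (- C * (\<beta> * (max (\<rho>-b) 0) powr (\<beta>-1)) * (t+\<tau>) powr (1-\<beta>)) * snd z)) (at (t,\<rho>))"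
proof -
  have k: "((\<lambda>s. s + \<tau>) has_real_derivative 1) (at t)" by (auto intro!: derivative_eq_intros)
  have kd: "((\<lambda>s. (s + \<tau>) powr (1-\<beta>)) has_real_derivative (1-\<beta>) * (t+\<tau>) powr (-\<beta>)) (at t)"
    using DERIV_fun_powr[OF k tt, of "1-\<beta>"] by simp
  have HK: "((\<lambda>z. (fst z + \<tau>) powr (1-\<beta>)) has_derivative (\<lambda>z. ((1-\<beta>) * (t+\<tau>) powr (-\<beta>)) * fst z)) (at (t,\<rho>))"
  proof -
    have f1: "(fst has_derivative fst) (at (t,\<rho>))" by (rule has_derivative_fst[OF has_derivative_ident])
    have f2: "((\<lambda>s. (s + \<tau>) powr (1-\<beta>)) has_derivative (*) ((1-\<beta>) * (t+\<tau>) powr (-\<beta>))) (at (fst (t,\<rho>)))"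
      using kd by (simp add: has_field_derivative_def)
    have "((\<lambda>z. (fst z + \<tau>) powr (1-\<beta>)) has_derivative (\<lambda>z. (*) ((1-\<beta>) * (t+\<tau>) powr (-\<beta>)) (fst z))) (at (t,\<rho>))"
      using has_derivative_compose[OF f1 f2] by simp
    thus ?thesis by simp
  qed
  have HH: "((\<lambda>z. hp \<beta> (snd z - b)) has_derivative (\<lambda>z. (\<beta> * (max (\<rho>-b) 0) powr (\<beta>-1)) * snd z)) (at (t,\<rho>))"
  proof -
    have "((\<lambda>z. snd z - b) has_derivative snd) (at (t,\<rho>))"
      by (auto intro!: derivative_eq_intros)
    note f1 = this
    have f2: "(hp \<beta> has_derivative (*) (\<beta> * (max (\<rho>-b) 0) powr (\<beta>-1))) (at ((\<lambda>z. snd z - b) (t,\<rho>)))"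
      using hp_deriv[OF b1, of "\<rho> - b"] by (simp add: has_field_derivative_def)
    have "((\<lambda>z. hp \<beta> (snd z - b)) has_derivative (\<lambda>z. (*) (\<beta> * (max (\<rho>-b) 0) powr (\<beta>-1)) (snd z))) (at (t,\<rho>))"
      using has_derivative_compose[OF f1 f2] by simp
    thus ?thesis by simp
  qed
  have "((\<lambda>z. \<delta> - C * (hp \<beta> (snd z - b) * (fst z + \<tau>) powr (1-\<beta>))) has_derivative
     (\<lambda>z. 0 - C * (hp \<beta> (snd (t,\<rho>) - b) * (((1-\<beta>) * (t+\<tau>) powr (-\<beta>)) * fst z)
                    + (\<beta> * (max (\<rho>-b) 0) powr (\<beta>-1)) * snd z * (fst (t,\<rho>) + \<tau>) powr (1-\<beta>)))) (at (t,\<rho>))"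
    by (intro has_derivative_diff has_derivative_const has_derivative_mult_right has_derivative_mult HH HK)
  note D = this
  have eqf: "(\<lambda>z. \<delta> - C * hp \<beta> (snd z - b) * (fst z + \<tau>) powr (1-\<beta>)) = (\<lambda>z. \<delta> - C * (hp \<beta> (snd z - b) * (fst z + \<tau>) powr (1-\<beta>)))"
    by (simp add: fun_eq_iff mult.assoc)
  show ?thesis unfolding eqf
    by (rule has_derivative_eq_rhs[OF D]) (auto simp: algebra_simps fun_eq_iff)
qed




lemma pde_ineq:
  fixes \<alpha> \<beta> K C u y x :: real
  assumes a: "\<alpha> > 1" and bdef: "\<beta> = \<alpha>/(\<alpha>-1)" and K: "K > 0" and C: "C > 0"
    and Cc: "C powr (\<alpha>-1) * (K * \<beta> powr \<alpha>) \<ge> \<beta> - 1"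
    and u: "u > 0" and y: "y \<ge> K"
  shows "C * hp \<beta> x * ((1-\<beta>) * u powr (-\<beta>)) + posp_pow \<alpha> (C * (\<beta> * (max x 0) powr (\<beta>-1)) * u powr (1-\<beta>)) * y \<ge> 0"
proof -
  have b1: "\<beta> > 1" using a unfolding bdef by (simp add: field_simps)
  have pnn: "posp_pow \<alpha> z \<ge> 0" for z unfolding posp_pow_def by simp
  show ?thesis
  proof (cases "x > 0")
    case False
    hence "hp \<beta> x = 0" unfolding hp_def using b1 by (simp add: max_def)
    thus ?thesis using pnn y K by simp
  next
    case True
    define Q where "Q = x powr \<beta> * u powr (-\<beta>)"
    have Q: "Q > 0" unfolding Q_def using True u by simp
    have e1: "(\<beta>-1)*\<alpha> = \<beta>" unfolding bdef using a by (simp add: field_simps)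
    have e2: "(1-\<beta>)*\<alpha> = -\<beta>" unfolding bdef using a by (simp add: field_simps)
    have p2pos: "C * (\<beta> * x powr (\<beta>-1)) * u powr (1-\<beta>) > 0" using C b1 True u by simp
    have "posp_pow \<alpha> (C * (\<beta> * (max x 0) powr (\<beta>-1)) * u powr (1-\<beta>))
        = (C * (\<beta> * x powr (\<beta>-1)) * u powr (1-\<beta>)) powr \<alpha>"
      unfolding posp_pow_def using True p2pos by simp
    also have "\<dots> = C powr \<alpha> * \<beta> powr \<alpha> * (x powr (\<beta>-1)) powr \<alpha> * (u powr (1-\<beta>)) powr \<alpha>"
      using C b1 True u by (simp add: powr_mult)
    also have "\<dots> = C powr \<alpha> * \<beta> powr \<alpha> * Q"
      unfolding Q_def by (simp add: powr_powr e1 e2)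
    finally have P: "posp_pow \<alpha> (C * (\<beta> * (max x 0) powr (\<beta>-1)) * u powr (1-\<beta>)) = C powr \<alpha> * \<beta> powr \<alpha> * Q" .
    have hx: "hp \<beta> x = x powr \<beta>" unfolding hp_def using True by simp
    have "C powr \<alpha> = C * C powr (\<alpha>-1)" using C by (simp add: powr_diff)
    moreover have "C * C powr (\<alpha>-1) * \<beta> powr \<alpha> * Q * K \<le> C * C powr (\<alpha>-1) * \<beta> powr \<alpha> * Q * y"
      using C Q y K by (intro mult_left_mono) auto
    ultimately have "C powr \<alpha> * \<beta> powr \<alpha> * Q * y \<ge> C * (C powr (\<alpha>-1) * (K * \<beta> powr \<alpha>)) * Q"
      by (simp add: algebra_simps)
    moreover have "C * (C powr (\<alpha>-1) * (K * \<beta> powr \<alpha>)) * Q \<ge> C * (\<beta>-1) * Q"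
      using Cc C Q by (intro mult_right_mono mult_left_mono) auto
    moreover have "C * hp \<beta> x * ((1-\<beta>) * u powr (-\<beta>)) = - (C * (\<beta>-1) * Q)"
      unfolding hx Q_def by (simp add: algebra_simps)
    ultimately show ?thesis using P by simp
  qed
qed




lemma penalty_est:
  fixes \<sigma> T s t \<eta> \<epsilon> :: real
  assumes "\<sigma> > 0" "T - s \<ge> \<sigma>" "T - t \<ge> \<sigma>" "\<eta> > 0" "\<epsilon> > 0"
    "\<bar>s - t\<bar> \<le> \<epsilon> * \<sigma>^3 / (2*\<eta>)"
  shows "\<eta>/(T-s) - \<eta>/(T-t) - \<eta>/(T-t)^2*(s-t) \<le> \<epsilon>/2 * \<bar>s-t\<bar>"
proof -
  have pos1: "T - s > 0" "T - t > 0" using assms by auto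
  have eq: "\<eta>/(T-s) - \<eta>/(T-t) - \<eta>/(T-t)^2*(s-t) = \<eta> * (s-t)^2 / ((T-s)*(T-t)^2)"
    using pos1 by (simp add: divide_simps power2_eq_square) (simp add: algebra_simps)
  have "(T-s)*(T-t)^2 \<ge> \<sigma>^3"
  proof -
    have "\<sigma>^2 \<le> (T-t)^2" using assms by (simp add: power_mono)
    hence "\<sigma> * \<sigma>^2 \<le> (T-s)*(T-t)^2" using assms by (intro mult_mono) auto
    thus ?thesis by (simp add: power3_eq_cube power2_eq_square)
  qed
  hence "\<eta> * (s-t)^2 / ((T-s)*(T-t)^2) \<le> \<eta> * (s-t)^2 / \<sigma>^3"
    using assms by (intro divide_left_mono) auto
  also have "\<dots> = (\<eta> * \<bar>s-t\<bar> / \<sigma>^3) * \<bar>s-t\<bar>" by (simp add: power2_eq_square)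
  also have "\<dots> \<le> (\<epsilon>/2) * \<bar>s-t\<bar>"
  proof (rule mult_right_mono)
    have "\<eta> * \<bar>s-t\<bar> \<le> \<eta> * (\<epsilon> * \<sigma>^3 / (2*\<eta>))" using assms by (intro mult_left_mono) auto
    also have "\<dots> = \<epsilon>/2 * \<sigma>^3" using assms by (simp add: field_simps)
    finally show "\<eta> * \<bar>s-t\<bar> / \<sigma>^3 \<le> \<epsilon>/2" using assms by (simp add: divide_le_eq)
  qed auto
  finally show ?thesis using eq by simp
qed

lemma comparison:
  fixes m w :: "real \<Rightarrow> real \<Rightarrow> real" and \<alpha> T a b :: real
  assumes contm: "continuous_on quadrant (\<lambda>(t,\<rho>). m t \<rho>)"
   and sub: "\<forall>t>0. \<forall>\<rho>>0. \<forall>(p1,p2) \<in> frechet_superdiff m t \<rho>. p1 + posp_pow \<alpha> p2 * m t \<rho> \<le> 0"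
   and T: "T > 0" and ab: "0 \<le> a" "a < b"
   and contw: "continuous_on ({0..T} \<times> {a..b}) (\<lambda>(t,\<rho>). w t \<rho>)"
   and init: "\<forall>\<rho>\<in>{a..b}. m 0 \<rho> \<le> w 0 \<rho>"
   and sides: "\<forall>t\<in>{0..T}. m t a \<le> w t a \<and> m t b \<le> w t b"
   and super: "\<forall>t\<in>{0<..<T}. \<forall>\<rho>\<in>{a<..<b}. \<exists>p1 p2. (p1,p2) \<in> frechet_superdiff w t \<rho> \<and>
                  (\<forall>y \<ge> w t \<rho>. p1 + posp_pow \<alpha> p2 * y \<ge> 0)"
  shows "\<forall>t\<in>{0..<T}. \<forall>\<rho>\<in>{a..b}. m t \<rho> \<le> w t \<rho>"
proof (rule ccontr)
  assume "\<not> ?thesis"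
  then obtain t0 \<rho>0 where t0: "0 \<le> t0" "t0 < T" and r0: "a \<le> \<rho>0" "\<rho>0 \<le> b"
    and gt: "m t0 \<rho>0 > w t0 \<rho>0" by auto
  define f where "f = (\<lambda>z::real\<times>real. m (fst z) (snd z) - w (fst z) (snd z))"
  define D where "D = {0..T} \<times> {a..b}"
  have Dq: "D \<subseteq> quadrant" using ab unfolding D_def quadrant_def by auto
  have cm: "continuous_on D (\<lambda>z. m (fst z) (snd z))"
    using continuous_on_subset[OF contm Dq] by (simp add: case_prod_beta')
  have cw: "continuous_on D (\<lambda>z. w (fst z) (snd z))"
    using contw unfolding D_def by (simp add: case_prod_beta')
  have cf: "continuous_on D f" unfolding f_def using cm cw by (intro continuous_intros)
  have cD: "compact D" unfolding D_def by (intro compact_Times compact_Icc)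
  have neD: "D \<noteq> {}" using T ab unfolding D_def by auto
  obtain zL where "zL \<in> D" and zL: "\<forall>z\<in>D. f z \<le> f zL"
    using continuous_attains_sup[OF cD neD cf] by blast
  define L where "L = f zL"
  define \<theta> where "\<theta> = f (t0, \<rho>0)"
  have th: "\<theta> > 0" using gt unfolding \<theta>_def f_def by simp
  have t0D: "(t0,\<rho>0) \<in> D" using t0 r0 unfolding D_def by auto
  have Lth: "\<theta> \<le> L" using zL t0D unfolding L_def \<theta>_def by auto
  define \<eta> where "\<eta> = \<theta> * (T - t0) / 4"
  have eta: "\<eta> > 0" using th t0 unfolding \<eta>_def by auto
  define \<sigma> where "\<sigma> = min ((T - t0)/2) (\<eta>/(2*L))"
  have sig: "\<sigma> > 0" using t0 eta th Lth unfolding \<sigma>_def by auto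
  have sigL: "\<eta>/\<sigma> \<ge> 2*L"
  proof -
    have "\<sigma> \<le> \<eta>/(2*L)" unfolding \<sigma>_def by auto
    hence "\<sigma> * (2*L) \<le> \<eta>" using th Lth by (simp add: le_divide_eq)
    thus ?thesis using sig by (simp add: le_divide_eq mult.commute)
  qed
  define T' where "T' = T - \<sigma>"
  have t0T': "t0 < T'"
  proof -
    have "\<sigma> \<le> (T - t0)/2" unfolding \<sigma>_def by (rule min.cobounded1)
    moreover have "t0 < T" using t0 by simp
    ultimately have "\<sigma> < T - t0" by argo
    thus ?thesis unfolding T'_def by linarith
  qed
  define D' where "D' = {0..T'} \<times> {a..b}"
  have D'D: "D' \<subseteq> D" unfolding D'_def D_def T'_def using sig by auto
  define \<Phi> where "\<Phi> = (\<lambda>z. f z - \<eta>/(T - fst z))"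
  have cPhi: "continuous_on D' \<Phi>"
    unfolding \<Phi>_def
    apply (intro continuous_intros continuous_on_subset[OF cf D'D])
    using sig unfolding D'_def T'_def by auto
  have cD': "compact D'" unfolding D'_def by (intro compact_Times compact_Icc)
  have neD': "D' \<noteq> {}" using t0T' t0 ab unfolding D'_def by auto
  obtain zs where zsD: "zs \<in> D'" and zs: "\<forall>z\<in>D'. \<Phi> z \<le> \<Phi> zs"
    using continuous_attains_sup[OF cD' neD' cPhi] by blast
  obtain ts rs where zs_eq: "zs = (ts, rs)" by (cases zs)
  have t0D': "(t0,\<rho>0) \<in> D'" using t0 r0 t0T' unfolding D'_def by auto
  have "\<Phi> (t0,\<rho>0) = \<theta> - \<theta>/4" unfolding \<Phi>_def \<theta>_def \<eta>_def using t0 by (auto simp: field_simps)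
  hence Phipos: "\<Phi> zs > 0" using zs t0D' th by fastforce
  have tsr: "0 \<le> ts" "ts \<le> T'" "a \<le> rs" "rs \<le> b" using zsD zs_eq unfolding D'_def by auto
  have Tts: "T - ts \<ge> \<sigma>" using tsr unfolding T'_def by auto
  have fzs: "f zs > \<eta>/(T - ts)" using Phipos Tts sig zs_eq unfolding \<Phi>_def by auto
  have fzs0: "f zs > 0" using fzs eta Tts sig by (smt (verit) divide_pos_pos)
  have "ts \<noteq> T'"
  proof
    assume "ts = T'"
    hence "T - ts = \<sigma>" unfolding T'_def by simp
    moreover have "f zs \<le> L" using zL zsD D'D unfolding L_def by auto
    ultimately have "\<Phi> zs \<le> L - \<eta>/\<sigma>" unfolding \<Phi>_def using zs_eq by simp
    thus False using sigL Phipos Lth th by linarith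
  qed
  hence ts1: "ts < T'" using tsr by simp
  have "ts \<noteq> 0"
  proof
    assume "ts = 0"
    hence "f zs \<le> 0" using init tsr zs_eq unfolding f_def by auto
    thus False using fzs0 by simp
  qed
  hence ts0: "0 < ts" using tsr by simp
  have rsa: "a < rs"
  proof (rule ccontr)
    assume "\<not> a < rs" hence "rs = a" using tsr by simp
    hence "f zs \<le> 0" using sides tsr zs_eq sig unfolding f_def T'_def by auto
    thus False using fzs0 by simp
  qed
  have rsb: "rs < b"
  proof (rule ccontr)
    assume "\<not> rs < b" hence "rs = b" using tsr by simp
    hence "f zs \<le> 0" using sides tsr zs_eq sig unfolding f_def T'_def by auto
    thus False using fzs0 by simp
  qed
  have tsT: "ts \<in> {0<..<T}" using ts0 ts1 sig unfolding T'_def by auto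
  obtain p1 p2 where pw: "(p1,p2) \<in> frechet_superdiff w ts rs"
     and pc: "\<forall>y \<ge> w ts rs. p1 + posp_pow \<alpha> p2 * y \<ge> 0"
    using super tsT rsa rsb by fastforce
  define q1 where "q1 = p1 + \<eta>/(T-ts)^2"
  have "(q1, p2) \<in> frechet_superdiff m ts rs"
    unfolding frechet_superdiff_def
  proof (simp only: mem_Collect_eq case_prod_conv, intro allI impI)
    fix \<epsilon> :: real assume ep: "\<epsilon> > 0"
    have pw': "\<forall>e>0. \<exists>d>0. \<forall>s r. s \<ge> 0 \<longrightarrow> r \<ge> 0 \<longrightarrow>
      norm ((s, r) - (ts, rs)) < d \<longrightarrow>
      w s r - w ts rs - p1 * (s - ts) - p2 * (r - rs) \<le> e * norm ((s, r) - (ts, rs))"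
      using pw unfolding frechet_superdiff_def by simp
    have "\<epsilon>/2 > 0" using ep by simp
    from pw'[rule_format, OF this] obtain \<delta>2 where d2: "\<delta>2 > 0" and hd2: "\<forall>s r. s \<ge> 0 \<longrightarrow> r \<ge> 0 \<longrightarrow>
      norm ((s, r) - (ts, rs)) < \<delta>2 \<longrightarrow>
      w s r - w ts rs - p1 * (s - ts) - p2 * (r - rs) \<le> \<epsilon>/2 * norm ((s, r) - (ts, rs))"
      by blast
    define \<delta> where "\<delta> = min (min (min ts (T'-ts)) (min (rs - a) (b - rs))) (min \<delta>2 (\<epsilon> * \<sigma>^3 / (2*\<eta>)))"
    show "\<exists>\<delta>>0. \<forall>s r. s \<ge> 0 \<longrightarrow> r \<ge> 0 \<longrightarrow>
      norm ((s, r) - (ts, rs)) < \<delta> \<longrightarrow>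
      m s r - m ts rs - q1 * (s - ts) - p2 * (r - rs) \<le> \<epsilon> * norm ((s, r) - (ts, rs))"
    proof (intro exI[of _ \<delta>] conjI allI impI)
    show "\<delta> > 0" unfolding \<delta>_def using ts0 ts1 rsa rsb d2 ep sig eta by auto
    fix s r :: real assume s0: "0 \<le> s" and r0': "0 \<le> r" and nd: "norm ((s, r) - (ts, rs)) < \<delta>"
    define N where "N = norm ((s, r) - (ts, rs))"
    have sN: "\<bar>s - ts\<bar> \<le> N" unfolding N_def using norm_fst_le[of "s-ts" "r-rs"] by simp
    have rN: "\<bar>r - rs\<bar> \<le> N" unfolding N_def using norm_snd_le[of "r-rs" "s-ts"] by simp
    have inD': "(s,r) \<in> D'" using sN rN nd unfolding N_def D'_def \<delta>_def by auto
    have "\<Phi> (s,r) \<le> \<Phi> zs" using zs inD' by blast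
    hence A: "m s r - m ts rs \<le> (w s r - w ts rs) + (\<eta>/(T-s) - \<eta>/(T-ts))"
      unfolding \<Phi>_def f_def zs_eq by simp
    have B: "w s r - w ts rs - p1 * (s - ts) - p2 * (r - rs) \<le> \<epsilon>/2 * N"
      using hd2 s0 r0' nd unfolding N_def \<delta>_def by auto
    have Ts: "T - s \<ge> \<sigma>" using inD' unfolding D'_def T'_def by auto
    have C: "\<eta>/(T-s) - \<eta>/(T-ts) - \<eta>/(T-ts)^2*(s-ts) \<le> \<epsilon>/2 * \<bar>s-ts\<bar>"
      using penalty_est[OF sig Ts Tts eta ep] sN nd unfolding N_def \<delta>_def by auto
    have "\<epsilon>/2 * \<bar>s-ts\<bar> \<le> \<epsilon>/2 * N" using sN ep by auto
    moreover have "m s r - m ts rs - q1 * (s - ts) - p2 * (r - rs) =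
       ((m s r - m ts rs) - (w s r - w ts rs) - (\<eta>/(T-s) - \<eta>/(T-ts)))
       + (w s r - w ts rs - p1 * (s - ts) - p2 * (r - rs))
       + (\<eta>/(T-s) - \<eta>/(T-ts) - \<eta>/(T-ts)^2*(s-ts))"
      unfolding q1_def by (simp add: algebra_simps)
    ultimately show "m s r - m ts rs - q1 * (s - ts) - p2 * (r - rs) \<le> \<epsilon> * norm ((s, r) - (ts, rs))"
      using A B C unfolding N_def by linarith
  qed
  qed
  moreover have "rs > 0" using rsa ab by simp
  ultimately have "q1 + posp_pow \<alpha> p2 * m ts rs \<le> 0" using sub ts0 by fastforce
  moreover have "p1 + posp_pow \<alpha> p2 * m ts rs \<ge> 0" using pc fzs0 zs_eq unfolding f_def by auto
  moreover have "\<eta>/(T-ts)^2 > 0" using eta Tts sig by auto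
  ultimately show False unfolding q1_def by linarith
qed




lemma limsup_inf_exists:
  fixes f :: "real \<Rightarrow> ereal"
  assumes "Limsup F f = \<infinity>" "eventually P F"
  shows "\<exists>x. P x \<and> f x > ereal A"
proof -
  have "Limsup F f \<le> Sup (f ` {x. P x})" unfolding Limsup_def
    using assms(2) by (intro INF_lower) auto
  hence "Sup (f ` {x. P x}) = \<infinity>" using assms(1) by simp
  hence "ereal A < Sup (f ` {x. P x})" by simp
  thus ?thesis by (auto simp: less_SUP_iff)
qed

lemma le_M:
  fixes m :: "real \<Rightarrow> real \<Rightarrow> real" and M K :: real
  assumes contm: "continuous_on quadrant (\<lambda>(t,\<rho>). m t \<rho>)"
   and sub: "\<forall>t>0. \<forall>\<rho>>0. \<forall>(p1,p2) \<in> frechet_superdiff m t \<rho>. p1 + posp_pow \<alpha> p2 * m t \<rho> \<le> 0"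
   and init: "\<forall>\<rho>\<ge>0. m 0 \<rho> \<le> M"
   and side: "\<forall>t\<ge>0. m t 0 \<le> 0"
   and bnd: "\<forall>t\<ge>0. \<forall>\<rho>\<ge>0. m t \<rho> \<le> K"
   and M: "M > 0"
  shows "\<forall>t\<ge>0. \<forall>\<rho>\<ge>0. m t \<rho> \<le> M"
proof (intro allI impI, rule ccontr)
  fix t \<rho> :: real assume t: "t \<ge> 0" and r: "\<rho> \<ge> 0" and "\<not> m t \<rho> \<le> M"
  hence gt: "m t \<rho> > M" by simp
  define \<eta> where "\<eta> = (m t \<rho> - M) / (2*(\<rho>+1))"
  have eta: "\<eta> > 0" unfolding \<eta>_def using gt r by simp
  define B where "B = \<rho> + 1 + \<bar>K\<bar>/\<eta>"
  have "\<bar>K\<bar>/\<eta> \<ge> 0" using eta by simp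
  hence B: "B > 0" "\<rho> \<le> B" unfolding B_def using r by linarith+
  have etaB: "\<eta> * B \<ge> \<bar>K\<bar>"
  proof -
    have "\<eta> * B = \<eta> * (\<rho>+1) + \<bar>K\<bar>" unfolding B_def using eta by (simp add: algebra_simps)
    thus ?thesis using eta r by (smt (verit) mult_nonneg_nonneg)
  qed
  define w where "w = (\<lambda>(s::real) (r::real). M + \<eta> * r)"
  have C: "\<forall>t\<in>{0..<t+1}. \<forall>\<rho>\<in>{0..B}. m t \<rho> \<le> w t \<rho>"
  proof (rule comparison[OF contm sub])
    show "t + 1 > 0" using t by simp
    show "0 \<le> (0::real)" by simp
    show "0 < B" using B by simp
    show "continuous_on ({0..t+1} \<times> {0..B}) (\<lambda>(t,\<rho>). w t \<rho>)"
      unfolding w_def by (simp add: case_prod_beta' continuous_intros)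
    show "\<forall>\<rho>\<in>{0..B}. m 0 \<rho> \<le> w 0 \<rho>"
      using init eta unfolding w_def by (auto intro!: add_increasing2)
    show "\<forall>s\<in>{0..t+1}. m s 0 \<le> w s 0 \<and> m s B \<le> w s B"
    proof
      fix s assume s: "s \<in> {0..t+1}"
      have "m s 0 \<le> w s 0" using side s M unfolding w_def by auto
      moreover have "m s B \<le> w s B"
      proof -
        have "m s B \<le> K" using bnd s B by auto
        thus ?thesis using etaB M unfolding w_def by linarith
      qed
      ultimately show "m s 0 \<le> w s 0 \<and> m s B \<le> w s B" ..
    qed
    show "\<forall>s\<in>{0<..<t+1}. \<forall>r\<in>{0<..<B}. \<exists>p1 p2. (p1,p2) \<in> frechet_superdiff w s r \<and>
                  (\<forall>y \<ge> w s r. p1 + posp_pow \<alpha> p2 * y \<ge> 0)"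
    proof (intro ballI exI conjI allI impI)
      fix s r assume "r \<in> {0<..<B}"
      show "(0, \<eta>) \<in> frechet_superdiff w s r"
        unfolding frechet_superdiff_def w_def
        by (auto intro!: exI[of _ 1] simp: algebra_simps)
      fix y assume y: "y \<ge> w s r"
      have "w s r > 0" using \<open>r \<in> {0<..<B}\<close> eta M unfolding w_def by (auto intro!: add_pos_nonneg)
      hence "y \<ge> 0" using y by simp
      thus "0 + posp_pow \<alpha> \<eta> * y \<ge> 0" unfolding posp_pow_def by simp
    qed
  qed
  have "m t \<rho> \<le> M + \<eta> * \<rho>" using C t r B unfolding w_def by auto
  moreover have "\<eta> * \<rho> < m t \<rho> - M"
  proof -
    have "\<eta> * \<rho> = (m t \<rho> - M) * (\<rho> / (2*(\<rho>+1)))" unfolding \<eta>_def by simp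
    also have "\<dots> < (m t \<rho> - M) * 1" using gt r by (intro mult_strict_left_mono) auto
    finally show ?thesis by simp
  qed
  ultimately show False by simp
qed




theorem mainTheorem9:
  fixes \<alpha> c0 M :: real and m0 :: "real \<Rightarrow> real" and m :: "real \<Rightarrow> real \<Rightarrow> real"
  assumes "\<alpha> > 1"
    and "BUC1 m0" and "mono_on {0..} m0" and "m0 0 = 0"
    and "M = Sup (m0 ` {0..})" and "M > 0"
    and "c0 > 0"
    and "\<forall>\<rho>. 0 \<le> \<rho> \<and> \<rho> < c0 \<longrightarrow> m0 \<rho> < M"
    and "\<forall>\<rho>\<ge>c0. m0 \<rho> = M"
    and "Limsup (at_left c0) (\<lambda>\<rho>. ereal ((M - m0 \<rho>) / (c0 - \<rho>) powr (\<alpha> / (\<alpha> - 1)))) = \<infinity>"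
    and "BUC2 m" and "mass_solution \<alpha> m0 m"
  shows "\<forall>t>0. free_boundary m M t > ereal c0"
proof -
  note a1 = assms(1) and buc = assms(2) and mono = assms(3) and Mdef = assms(5) and Mpos = assms(6)
    and c0pos = assms(7) and lims = assms(10) and buc2 = assms(11) and sol = assms(12)
  have contm: "continuous_on quadrant (\<lambda>(t,\<rho>). m t \<rho>)"
   and sub: "\<forall>t>0. \<forall>\<rho>>0. \<forall>(p1,p2) \<in> frechet_superdiff m t \<rho>. p1 + posp_pow \<alpha> p2 * m t \<rho> \<le> 0"
   and init: "\<forall>\<rho>\<ge>0. m 0 \<rho> \<le> m0 \<rho>"
   and side: "\<forall>t\<ge>0. m t 0 \<le> 0"
    using sol unfolding mass_solution_def mass_subsolution_def by auto
  have bdd0: "bdd_above (m0 ` {0..})" using buc unfolding BUC1_def by (auto intro: bounded_imp_bdd_above)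
  have m0M: "\<forall>\<rho>\<ge>0. m0 \<rho> \<le> M" unfolding Mdef using bdd0 by (auto intro: cSUP_upper)
  obtain K where K: "\<forall>z\<in>quadrant. norm ((\<lambda>(t,\<rho>). m t \<rho>) z) \<le> K"
    using buc2 unfolding BUC2_def bounded_iff by auto
  have bnd: "\<forall>t\<ge>0. \<forall>\<rho>\<ge>0. m t \<rho> \<le> K"
  proof (intro allI impI)
    fix t \<rho> :: real assume "t \<ge> 0" "\<rho> \<ge> 0"
    hence "(t,\<rho>) \<in> quadrant" unfolding quadrant_def by auto
    hence "\<bar>m t \<rho>\<bar> \<le> K" using K by fastforce
    thus "m t \<rho> \<le> K" by simp
  qed
  have mleM: "\<forall>t\<ge>0. \<forall>\<rho>\<ge>0. m t \<rho> \<le> M"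
    by (rule le_M[OF contm sub _ side bnd Mpos]) (meson init m0M order_trans)
  show ?thesis
  proof (intro allI impI)
    fix t0 :: real assume t0: "t0 > 0"

    define \<beta> where "\<beta> = \<alpha>/(\<alpha>-1)"
    have b1: "\<beta> > 1" using a1 unfolding \<beta>_def by (simp add: field_simps)
    define K0 where "K0 = M/2"
    have K0: "K0 > 0" unfolding K0_def using Mpos by simp
    define C where "C = ((\<beta>-1)/(K0 * \<beta> powr \<alpha>)) powr (1/(\<alpha>-1))"
    have Cpos: "C > 0" unfolding C_def using b1 K0 by simp
    have Cc: "C powr (\<alpha>-1) * (K0 * \<beta> powr \<alpha>) \<ge> \<beta> - 1"
    proof -
      have "C powr (\<alpha>-1) = (\<beta>-1)/(K0 * \<beta> powr \<alpha>)"
        unfolding C_def using b1 K0 a1 by (simp add: powr_powr)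
      thus ?thesis using K0 b1 by simp
    qed
    define A where "A = C * 2 powr \<beta> * t0 powr (1-\<beta>) + 1"
    have A1: "A - 1 = C * 2 powr \<beta> * t0 powr (1-\<beta>)" unfolding A_def by simp
    have Apos: "A > 0" unfolding A_def using Cpos t0 by (simp add: add_pos_nonneg)
    define d0 where "d0 = min (c0/2) ((M/(2*A)) powr (1/\<beta>))"
    have d0: "d0 > 0" unfolding d0_def using c0pos Mpos Apos by simp
    have "eventually (\<lambda>x. x \<in> {c0-d0<..<c0}) (at_left c0)"
      using d0 by (intro eventually_at_left_real) simp
    from limsup_inf_exists[OF lims this, of A] obtain \<rho>1 where
      r1: "\<rho>1 \<in> {c0-d0<..<c0}" and rat: "(M - m0 \<rho>1) / (c0 - \<rho>1) powr (\<alpha>/(\<alpha>-1)) > A" by auto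
    define d where "d = c0 - \<rho>1"
    have d: "d > 0" "d < d0" using r1 unfolding d_def by auto
    have dc: "d < c0/2" using d unfolding d0_def by simp
    have r1pos: "\<rho>1 > 0" using dc c0pos unfolding d_def by simp
    define \<delta>1 where "\<delta>1 = M - m0 \<rho>1"
    have dpb: "d powr \<beta> > 0" using d by simp
    have del1: "\<delta>1 > A * d powr \<beta>"
      using rat dpb unfolding \<delta>1_def d_def \<beta>_def by (simp add: less_divide_eq)
    have AdM: "A * d powr \<beta> \<le> M/2"
    proof -
      have "d powr \<beta> \<le> ((M/(2*A)) powr (1/\<beta>)) powr \<beta>"
        using d b1 unfolding d0_def by (intro powr_mono2) auto
      also have "\<dots> = M/(2*A)" using b1 Mpos Apos by (simp add: powr_powr)
      finally show ?thesis using Apos by (simp add: le_divide_eq algebra_simps)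
    qed
    define \<delta> where "\<delta> = min \<delta>1 (M/2)"
    have delA: "\<delta> \<ge> A * d powr \<beta>" unfolding \<delta>_def using del1 AdM by simp
    have delpos: "\<delta> > 0" using delA Apos dpb by (smt (verit) mult_pos_pos)
    have delM: "\<delta> \<le> M/2" unfolding \<delta>_def by simp
    have del_le1: "\<delta> \<le> \<delta>1" unfolding \<delta>_def by simp
    define \<tau> where "\<tau> = (C * (d/2) powr \<beta> / \<delta>) powr (1/(\<beta>-1))"
    have taupos: "\<tau> > 0" unfolding \<tau>_def using Cpos d delpos by simp
    have tau_pow: "\<tau> powr (1-\<beta>) = \<delta> / (C * (d/2) powr \<beta>)"
    proof -
      have "\<tau> powr (\<beta>-1) = C * (d/2) powr \<beta> / \<delta>"
        unfolding \<tau>_def using Cpos d delpos b1 by (simp add: powr_powr)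
      moreover have "\<tau> powr (1-\<beta>) = inverse (\<tau> powr (\<beta>-1))"
        using taupos by (simp add: powr_minus[symmetric])
      ultimately show ?thesis by simp
    qed
    define b where "b = \<rho>1 - d/2"
    define v where "v = (\<lambda>s r. \<delta> - C * hp \<beta> (r - b) * (s + \<tau>) powr (1-\<beta>))"
    define w where "w = (\<lambda>s r. M - max (v s r) 0)"
    define T where "T = t0 + 1"
    define X where "X = (\<delta> * (T+\<tau>) powr (\<beta>-1) / C) powr (1/\<beta>)"
    have Xpos: "X > 0" unfolding X_def using delpos Cpos taupos t0 unfolding T_def by simp
    define B where "B = c0 + d + X"
    have Bpos: "B > 0" unfolding B_def using c0pos d Xpos by simp
    have hp_nn: "hp \<beta> x \<ge> 0" for x unfolding hp_def by simp
    have v_le: "v s r \<le> \<delta>" if "s + \<tau> > 0" for s r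
      unfolding v_def using hp_nn Cpos by (simp add: mult_nonneg_nonneg)
    have w_ge: "w s r \<ge> M - \<delta>" if "s + \<tau> > 0" for s r
      using v_le[OF that, of r] delpos unfolding w_def by simp
    have w_le: "w s r \<le> M" for s r unfolding w_def by simp
    have cmp: "\<forall>t\<in>{0..<T}. \<forall>\<rho>\<in>{0..B}. m t \<rho> \<le> w t \<rho>"
    proof (rule comparison[OF contm sub])
      show "T > 0" unfolding T_def using t0 by simp
      show "0 \<le> (0::real)" by simp
      show "0 < B" by (rule Bpos)
      show "continuous_on ({0..T} \<times> {0..B}) (\<lambda>(t,\<rho>). w t \<rho>)"
      proof -
        have vc: "continuous (at z) (\<lambda>z. v (fst z) (snd z))" if "fst z \<ge> 0" for z
        proof -
          obtain s r where z: "z = (s,r)" by (cases z)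
          have "s + \<tau> > 0" using that z taupos by simp
          from has_derivative_continuous[OF v_deriv[OF b1 this, of \<delta> C b r]]
          show ?thesis unfolding v_def z by simp
        qed
        have "continuous_on ({0..T} \<times> {0..B}) (\<lambda>z. v (fst z) (snd z))"
          by (intro continuous_at_imp_continuous_on ballI vc) auto
        hence "continuous_on ({0..T} \<times> {0..B}) (\<lambda>z. M - max (v (fst z) (snd z)) 0)"
          by (intro continuous_intros)
        thus ?thesis unfolding w_def by (simp add: case_prod_beta')
      qed
      show "\<forall>\<rho>\<in>{0..B}. m 0 \<rho> \<le> w 0 \<rho>"
      proof
        fix \<rho> assume r: "\<rho> \<in> {0..B}"
        have "m0 \<rho> \<le> w 0 \<rho>"
        proof (cases "v 0 \<rho> > 0")
          case False
          hence "w 0 \<rho> = M" unfolding w_def by simp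
          thus ?thesis using m0M r by simp
        next
          case True
          have "\<rho> < \<rho>1"
          proof (rule ccontr)
            assume "\<not> \<rho> < \<rho>1"
            hence rb: "\<rho> - b \<ge> d/2" unfolding b_def by simp
            have "hp \<beta> (\<rho> - b) = (\<rho> - b) powr \<beta>" unfolding hp_def using rb d by simp
            also have "\<dots> \<ge> (d/2) powr \<beta>" using rb d b1 by (intro powr_mono2) auto
            finally have hb: "hp \<beta> (\<rho> - b) \<ge> (d/2) powr \<beta>" .
            have dp2: "(d/2) powr \<beta> > 0" using d by simp
            have "C * (d/2) powr \<beta> \<le> C * hp \<beta> (\<rho>-b)" using hb Cpos by simp
            hence "C * (d/2) powr \<beta> * (\<delta> / (C * (d/2) powr \<beta>)) \<le> C * hp \<beta> (\<rho>-b) * (\<delta> / (C * (d/2) powr \<beta>))"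
              by (rule mult_right_mono) (use Cpos delpos dp2 in simp)
            hence "C * hp \<beta> (\<rho> - b) * (0 + \<tau>) powr (1-\<beta>) \<ge> C * (d/2) powr \<beta> * (\<delta> / (C * (d/2) powr \<beta>))"
              using tau_pow by simp
            also have "C * (d/2) powr \<beta> * (\<delta> / (C * (d/2) powr \<beta>)) = \<delta>" using Cpos dp2 by simp
            finally have "v 0 \<rho> \<le> 0" unfolding v_def by simp
            thus False using True by simp
          qed
          hence "m0 \<rho> \<le> m0 \<rho>1" using mono r r1pos by (intro mono_onD[OF mono]) auto
          moreover have "w 0 \<rho> \<ge> M - \<delta>" using w_ge[of 0] taupos by simp
          ultimately show ?thesis using del_le1 unfolding \<delta>1_def by simp
        qed
        thus "m 0 \<rho> \<le> w 0 \<rho>" using init r by (meson atLeastAtMost_iff order_trans)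
      qed
      show "\<forall>t\<in>{0..T}. m t 0 \<le> w t 0 \<and> m t B \<le> w t B"
      proof
        fix t assume t: "t \<in> {0..T}"
        have "m t 0 \<le> w t 0" using side t w_ge[of t 0] taupos delM Mpos by fastforce
        moreover have "v t B \<le> 0"
        proof -
          have tp: "t + \<tau> > 0" using t taupos by simp
          have "B - b = X + 5/2 * d" unfolding B_def b_def d_def by (simp add: field_simps)
          hence Bb: "B - b \<ge> X" using d by simp
          have "hp \<beta> (B - b) = (B - b) powr \<beta>" unfolding hp_def using Bb Xpos by simp
          also have "\<dots> \<ge> X powr \<beta>" using Bb Xpos b1 by (intro powr_mono2) auto
          also have "X powr \<beta> = \<delta> * (T+\<tau>) powr (\<beta>-1) / C"
            unfolding X_def using delpos Cpos taupos t0 b1 unfolding T_def by (simp add: powr_powr)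
          finally have hb: "hp \<beta> (B - b) \<ge> \<delta> * (T+\<tau>) powr (\<beta>-1) / C" .
          have kb: "(t + \<tau>) powr (1-\<beta>) \<ge> (T + \<tau>) powr (1-\<beta>)"
            using tp t b1 by (intro powr_mono2') auto
          have "C * hp \<beta> (B - b) * (t + \<tau>) powr (1-\<beta>) \<ge> C * (\<delta> * (T+\<tau>) powr (\<beta>-1) / C) * (T + \<tau>) powr (1-\<beta>)"
            using hb kb Cpos by (intro mult_mono mult_left_mono) (auto simp: hp_nn)
          also have "C * (\<delta> * (T+\<tau>) powr (\<beta>-1) / C) * (T + \<tau>) powr (1-\<beta>) = \<delta> * ((T+\<tau>) powr (\<beta>-1) * (T + \<tau>) powr (1-\<beta>))"
            using Cpos by simp
          also have "(T+\<tau>) powr (\<beta>-1) * (T + \<tau>) powr (1-\<beta>) = 1"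
            using taupos t0 unfolding T_def by (simp add: powr_add[symmetric])
          finally show ?thesis unfolding v_def by simp
        qed
        hence "w t B = M" unfolding w_def by simp
        hence "m t B \<le> w t B" using mleM t Bpos by simp
        ultimately show "m t 0 \<le> w t 0 \<and> m t B \<le> w t B" ..
      qed
      show "\<forall>t\<in>{0<..<T}. \<forall>\<rho>\<in>{0<..<B}. \<exists>p1 p2. (p1,p2) \<in> frechet_superdiff w t \<rho> \<and>
                  (\<forall>y \<ge> w t \<rho>. p1 + posp_pow \<alpha> p2 * y \<ge> 0)"
      proof (intro ballI)
        fix t \<rho> assume t: "t \<in> {0<..<T}" and r: "\<rho> \<in> {0<..<B}"
        have tp: "t + \<tau> > 0" using t taupos by simp
        show "\<exists>p1 p2. (p1,p2) \<in> frechet_superdiff w t \<rho> \<and> (\<forall>y \<ge> w t \<rho>. p1 + posp_pow \<alpha> p2 * y \<ge> 0)"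
        proof (cases "v t \<rho> > 0")
          case False
          hence "w t \<rho> = M" unfolding w_def by simp
          hence "(0,0) \<in> frechet_superdiff w t \<rho>" using w_le by (intro superdiff_max) simp
          moreover have "posp_pow \<alpha> 0 = 0" unfolding posp_pow_def by simp
          ultimately show ?thesis by (intro exI[of _ 0]) simp
        next
          case True
          define p1 where "p1 = C * hp \<beta> (\<rho> - b) * ((1-\<beta>) * (t+\<tau>) powr (-\<beta>))"
          define p2 where "p2 = C * (\<beta> * (max (\<rho>-b) 0) powr (\<beta>-1)) * (t+\<tau>) powr (1-\<beta>)"
          define w1 where "w1 = (\<lambda>s r. M - v s r)"
          have "((\<lambda>z. M - (\<delta> - C * hp \<beta> (snd z - b) * (fst z + \<tau>) powr (1-\<beta>))) has_derivative
             (\<lambda>z. 0 - ((- C * hp \<beta> (\<rho> - b) * ((1-\<beta>) * (t+\<tau>) powr (-\<beta>))) * fst z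
                + (- C * (\<beta> * (max (\<rho>-b) 0) powr (\<beta>-1)) * (t+\<tau>) powr (1-\<beta>)) * snd z))) (at (t,\<rho>))"
            by (intro has_derivative_diff has_derivative_const v_deriv[OF b1 tp])
          hence "((\<lambda>z. w1 (fst z) (snd z)) has_derivative (\<lambda>z. p1 * fst z + p2 * snd z)) (at (t,\<rho>))"
            unfolding w1_def v_def p1_def p2_def
            by (rule has_derivative_eq_rhs) (auto simp: fun_eq_iff algebra_simps)
          hence "(p1,p2) \<in> frechet_superdiff w1 t \<rho>" by (rule deriv_superdiff)
          hence "(p1,p2) \<in> frechet_superdiff w t \<rho>"
            by (rule superdiff_below[rotated 2]) (use True in \<open>auto simp: w_def w1_def\<close>)
          moreover have "\<forall>y \<ge> w t \<rho>. p1 + posp_pow \<alpha> p2 * y \<ge> 0"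
          proof (intro allI impI)
            fix y assume "y \<ge> w t \<rho>"
            hence "y \<ge> K0" using w_ge[OF tp, of \<rho>] delM unfolding K0_def by simp
            from pde_ineq[OF a1 \<beta>_def K0 Cpos Cc tp this, of "\<rho> - b"]
            show "p1 + posp_pow \<alpha> p2 * y \<ge> 0" unfolding p1_def p2_def .
          qed
          ultimately show ?thesis by blast
        qed
      qed
    qed
    have below: "m t0 \<rho> < M" if r: "0 \<le> \<rho>" "\<rho> \<le> c0 + d/2" for \<rho>
    proof -
      have "\<rho> \<le> B" using r Xpos d unfolding B_def by simp
      hence mw: "m t0 \<rho> \<le> w t0 \<rho>" using cmp r t0 unfolding T_def by simp
      have dd: "c0 - \<rho>1 = d" by (simp add: d_def)
      have "\<rho> - b \<le> 2*d" using r dd unfolding b_def by argo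
      hence rb: "max (\<rho> - b) 0 \<le> 2*d" using d by simp
      have hb: "hp \<beta> (\<rho> - b) \<le> (2*d) powr \<beta>" unfolding hp_def using rb b1 by (intro powr_mono2) auto
      have kb: "(t0 + \<tau>) powr (1-\<beta>) \<le> t0 powr (1-\<beta>)" using t0 taupos b1 by (intro powr_mono2') auto
      have "C * hp \<beta> (\<rho> - b) * (t0 + \<tau>) powr (1-\<beta>) \<le> C * (2*d) powr \<beta> * t0 powr (1-\<beta>)"
        using hb kb Cpos by (intro mult_mono mult_left_mono) (auto simp: hp_nn)
      also have "\<dots> = (A - 1) * d powr \<beta>" unfolding A1 using d by (simp add: powr_mult)
      finally have "v t0 \<rho> \<ge> \<delta> - (A - 1) * d powr \<beta>" unfolding v_def by simp
      hence "v t0 \<rho> \<ge> d powr \<beta>" using delA by (simp add: algebra_simps)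
      hence "v t0 \<rho> > 0" using dpb by linarith
      hence "w t0 \<rho> < M" unfolding w_def by simp
      thus ?thesis using mw by simp
    qed
    have "ereal (c0 + d/2) \<le> free_boundary m M t0"
      unfolding free_boundary_def
    proof (rule Inf_greatest)
      fix x assume "x \<in> ereal ` {\<rho>. 0 \<le> \<rho> \<and> m t0 \<rho> = M}"
      then obtain \<rho> where "x = ereal \<rho>" "0 \<le> \<rho>" "m t0 \<rho> = M" by auto
      moreover have "\<rho> > c0 + d/2" using below[of \<rho>] \<open>0 \<le> \<rho>\<close> \<open>m t0 \<rho> = M\<close> by force
      ultimately show "ereal (c0 + d/2) \<le> x" by simp
    qed
    moreover have "ereal c0 < ereal (c0 + d/2)" using d by simp
    ultimately show "free_boundary m M t0 > ereal c0" by (rule order.strict_trans2[rotated])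
  qed
qed


end
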